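(* Let $m\ge2$ and let $r\ge0$ be the integer with $2^r\,\|\,m+1$. Then for every $a\in\{1,2,\dots,m\}$, $a$ is periodic under $f_2$ (i.e. $f_2^t(a)=a$ for some $t\ge1$) if and only if $2^r\,\|\,a$. Equivalently, the union of all fixed sets $K(x)\ne\{0\}$ of the two-digit base-$m$ Kaprekar map equals $\{a(m-1):1\le a\le m,\ 2^r\,\|\,a\}$.
   Context: For an integer $m\ge2$, $X=\{0,1,\dots,m^2-1\}$, each element written with exactly two base-$m$ digits (leading zeros allowed), and $f(x)=D(x)-A(x)$ is the two-digit base-$m$ Kaprekar map ($D(x)$, $A(x)$: digits of $x$ in nonincreasing, resp. nondecreasing, order). The map $f_2:\{0,\dots,m\}\to\{0,\dots,m\}$ is defined by $f(a(m-1))=f_2(a)(m-1)$; explicitly $f_2(0)=0$ and $f_2(a)=|2a-m-1|$ for $1\le a\le m$. For integers $r\ge0$ and $N\neq0$, $2^r\,\|\,N$ means $2^r\mid N$ and $2^{r+1}\nmid N$. The fixed set of $x$ is $K(x)=\{f^{S(x)+i}(x):0\le i<T(x)\}$, where $S(x)$ is the least $s\ge0$ with $f^{s+t}(x)=f^s(x)$ for some $t\ge1$ and $T(x)$ the least such $t$ for $s=S(x)$. *)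

theory Defs
  imports Main
begin

definition exdvd2 :: "nat \<Rightarrow> nat \<Rightarrow> bool" where
  "exdvd2 r N \<longleftrightarrow> 2 ^ r dvd N \<and> \<not> 2 ^ (r + 1) dvd N"

definition kapD :: "nat \<Rightarrow> nat \<Rightarrow> nat" where
  "kapD m x = max (x div m) (x mod m) * m + min (x div m) (x mod m)"

definition kapA :: "nat \<Rightarrow> nat \<Rightarrow> nat" where
  "kapA m x = min (x div m) (x mod m) * m + max (x div m) (x mod m)"

definition kap :: "nat \<Rightarrow> nat \<Rightarrow> nat" where
  "kap m x = kapD m x - kapA m x"

definition f2 :: "nat \<Rightarrow> nat \<Rightarrow> nat" where
  "f2 m a = (if a = 0 then 0 else nat \<bar>2 * int a - int m - 1\<bar>)"

definition kapS :: "nat \<Rightarrow> nat \<Rightarrow> nat" where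
  "kapS m x = (LEAST s. \<exists>t\<ge>1. (kap m ^^ (s + t)) x = (kap m ^^ s) x)"

definition kapT :: "nat \<Rightarrow> nat \<Rightarrow> nat" where
  "kapT m x = (LEAST t. t \<ge> 1 \<and> (kap m ^^ (kapS m x + t)) x = (kap m ^^ kapS m x) x)"

definition kapK :: "nat \<Rightarrow> nat \<Rightarrow> nat set" where
  "kapK m x = {(kap m ^^ (kapS m x + i)) x | i. i < kapT m x}"

end

theory Submission
  imports Defs
begin

lemma kap_eq: "kap m x = (max (x div m) (x mod m) - min (x div m) (x mod m)) * (m - 1)"
proof -
  define p where "p = max (x div m) (x mod m)"
  define q where "q = min (x div m) (x mod m)"
  have pq: "q \<le> p" unfolding p_def q_def by simp
  then obtain d where d: "p = q + d" using le_Suc_ex by blast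
  have "kap m x = (p*m+q) - (q*m+p)" unfolding kap_def kapD_def kapA_def p_def q_def by simp
  also have "\<dots> = d * m - d" using d by (simp add: algebra_simps)
  also have "\<dots> = (p - q) * (m - 1)" using d by (simp add: algebra_simps diff_mult_distrib2)
  finally show ?thesis unfolding p_def q_def .
qed

lemma kap_lt: assumes "x < m^2" shows "kap m x < m^2"
proof -
  have m: "m > 0" using assms by (cases m) auto
  have "x div m < m" using assms by (simp add: power2_eq_square div_less_iff_less_mult m)
  moreover have "x mod m < m" using m by simp
  ultimately have "max (x div m) (x mod m) - min (x div m) (x mod m) \<le> m - 1" by linarith
  hence "kap m x \<le> (m - 1) * (m - 1)" unfolding kap_eq by (simp add: mult_right_mono)
  also have "\<dots> < m^2" using m by (simp add: power2_eq_square mult_strict_mono)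
  finally show ?thesis .
qed

lemma kap_pow_lt: assumes "x < m^2" shows "(kap m ^^ k) x < m^2"
  using assms by (induction k) (auto intro: kap_lt)

lemma kap_0: "kap m 0 = 0" unfolding kap_eq by simp

lemma kap_pow_0: "(kap m ^^ k) 0 = 0"
  by (induction k) (auto simp: kap_0)

lemma f2_le: assumes "a \<le> m" shows "f2 m a \<le> m"
  using assms unfolding f2_def by auto

lemma f2_alt: assumes "1 \<le> a" "a \<le> m"
  shows "f2 m a = (if 2*a \<ge> m+1 then 2*a-(m+1) else m+1-2*a)"
  using assms unfolding f2_def by auto

lemma kap_f2: assumes "m \<ge> 2" "a \<le> m" shows "kap m (a*(m-1)) = f2 m a * (m-1)"
proof (cases "a = 0")
  case True then show ?thesis by (simp add: kap_0 f2_def)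
next
  case False
  have e: "a*(m-1) = (a-1)*m + (m-a)" using False assms
    by (cases a) (auto simp: algebra_simps diff_mult_distrib2)
  have lt: "m - a < m" using False assms by simp
  have dv: "a*(m-1) div m = a - 1" unfolding e using lt by simp
  have md: "a*(m-1) mod m = m - a" unfolding e using lt by simp
  show ?thesis unfolding kap_eq dv md using False assms by (auto simp: f2_def)
qed

lemma f2_pow_le: assumes "a \<le> m" shows "(f2 m ^^ k) a \<le> m"
  using assms by (induction k) (auto intro: f2_le)

lemma kap_f2_pow: assumes "m \<ge> 2" "a \<le> m" shows "(kap m ^^ k) (a*(m-1)) = (f2 m ^^ k) a * (m-1)"
proof (induction k)
  case 0 then show ?case by simp
next
  case (Suc k)
  have "(kap m ^^ Suc k) (a*(m-1)) = kap m ((f2 m ^^ k) a * (m-1))" using Suc by simp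
  also have "\<dots> = f2 m ((f2 m ^^ k) a) * (m-1)" using kap_f2[OF assms(1) f2_pow_le[OF assms(2)]] .
  finally show ?case by simp
qed

lemma f2_dvd: assumes "2^j dvd b" "2^(j+1) dvd (m+1)" "b \<le> m"
  shows "2^(j+1) dvd f2 m b"
proof (cases "b = 0")
  case True then show ?thesis by (simp add: f2_def)
next
  case False
  have "2^(j+1) dvd 2*b" using assms(1) by simp
  then show ?thesis using False assms(2,3) by (auto simp: f2_alt dvd_diff_nat)
qed

lemma f2_pow_dvd: assumes "j \<le> r" "2^r dvd (m+1)" "b \<le> m"
  shows "2^j dvd (f2 m ^^ j) b"
  using assms(1)
proof (induction j)
  case 0 then show ?case by simp
next
  case (Suc j)
  have "(2::nat)^(j+1) dvd 2^r" by (rule le_imp_power_dvd) (use Suc.prems in simp)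
  hence "2^(j+1) dvd (m+1)" using assms(2) dvd_trans by blast
  then show ?case using Suc f2_dvd[of j "(f2 m ^^ j) b" m] f2_pow_le[OF assms(3)] by simp
qed

lemma f2_B: assumes "exdvd2 r (m+1)" "2^r dvd a" "1 \<le> a" "a \<le> m"
  shows "exdvd2 r (f2 m a)"
proof -
  have n: "2^r dvd (m+1)" "\<not> 2^(r+1) dvd (m+1)" using assms(1) unfolding exdvd2_def by auto
  have a2: "2^(r+1) dvd 2*a" using assms(2) by simp
  have a1: "2^r dvd 2*a" using assms(2) by simp
  show ?thesis
  proof (cases "2*a \<ge> m+1")
    case True
    have "2^r dvd 2*a - (m+1)" using a1 n(1) by (simp add: dvd_diff_nat)
    moreover have "\<not> 2^(r+1) dvd 2*a - (m+1)"
    proof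
      assume "2^(r+1) dvd 2*a - (m+1)"
      hence "2^(r+1) dvd 2*a - (2*a - (m+1))" using a2 by (simp add: dvd_diff_nat)
      thus False using True n(2) by simp
    qed
    ultimately show ?thesis using True assms by (simp add: f2_alt exdvd2_def)
  next
    case False
    have "2^r dvd (m+1) - 2*a" using a1 n(1) by (simp add: dvd_diff_nat)
    moreover have "\<not> 2^(r+1) dvd (m+1) - 2*a"
    proof
      assume "2^(r+1) dvd (m+1) - 2*a"
      hence "2^(r+1) dvd ((m+1) - 2*a) + 2*a" using a2 by simp
      thus False using False n(2) by simp
    qed
    ultimately show ?thesis using False assms by (simp add: f2_alt exdvd2_def)
  qed
qed

lemma f2_pos: assumes "exdvd2 r (f2 m a)" shows "f2 m a \<ge> 1"
  using assms unfolding exdvd2_def by (cases "f2 m a") auto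

definition B0 where "B0 m r = {b. b \<le> m \<and> (b = 0 \<or> exdvd2 r b)}"

lemma B0_inv: assumes "exdvd2 r (m+1)" "b \<in> B0 m r" shows "f2 m b \<in> B0 m r"
proof (cases "b = 0")
  case True then show ?thesis using assms by (simp add: B0_def f2_def)
next
  case False
  then have "exdvd2 r b" "b \<le> m" using assms by (auto simp: B0_def)
  then show ?thesis using f2_B[OF assms(1), of b] False f2_le[of b m]
    by (auto simp: B0_def exdvd2_def)
qed

lemma B0_pow: assumes "exdvd2 r (m+1)" "b \<in> B0 m r" shows "(f2 m ^^ k) b \<in> B0 m r"
  using assms by (induction k) (auto intro: B0_inv)

lemma reach_B0: assumes "exdvd2 r (m+1)" "a \<le> m" shows "(f2 m ^^ (r+1)) a \<in> B0 m r"
proof -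
  have n: "2^r dvd (m+1)" using assms(1) unfolding exdvd2_def by auto
  define b where "b = (f2 m ^^ r) a"
  have bd: "2^r dvd b" unfolding b_def using f2_pow_dvd[OF le_refl n assms(2)] .
  have bm: "b \<le> m" unfolding b_def using f2_pow_le[OF assms(2)] .
  have "f2 m b \<in> B0 m r"
  proof (cases "b = 0")
    case True then show ?thesis by (simp add: B0_def f2_def)
  next
    case False
    then show ?thesis using f2_B[OF assms(1) bd] bm f2_le[OF bm] by (auto simp: B0_def)
  qed
  then show ?thesis unfolding b_def by simp
qed

lemma funpow_mult_fix: assumes "(f ^^ t) a = a" shows "(f ^^ (t*k)) a = a"
proof (induction k)
  case 0 then show ?case by simp
next
  case (Suc k)
  have "(f ^^ (t*Suc k)) a = (f ^^ t) ((f ^^ (t*k)) a)" by (simp add: funpow_add)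
  then show ?case using Suc assms by simp
qed

lemma periodic_imp: assumes "exdvd2 r (m+1)" "1 \<le> a" "a \<le> m" "t \<ge> 1" "(f2 m ^^ t) a = a"
  shows "exdvd2 r a"
proof -
  have "(f2 m ^^ (t*(r+1))) a = a" using funpow_mult_fix[OF assms(5)] .
  obtain q where q: "t*(r+1) = q + (r+1)" using assms(4)
    by (metis add.commute le_add_diff_inverse mult_1 mult_le_mono1)
  have "(f2 m ^^ (t*(r+1))) a = (f2 m ^^ q) ((f2 m ^^ (r+1)) a)" unfolding q funpow_add by simp
  also have "\<dots> \<in> B0 m r" using B0_pow[OF assms(1) reach_B0[OF assms(1,3)]] .
  finally show ?thesis using \<open>(f2 m ^^ (t*(r+1))) a = a\<close> assms(2) by (auto simp: B0_def)
qed

definition BB where "BB m r = {b. 1 \<le> b \<and> b \<le> m \<and> exdvd2 r b}"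

lemma BB_inv: assumes "exdvd2 r (m+1)" "b \<in> BB m r" shows "f2 m b \<in> BB m r"
  using assms f2_B[OF assms(1), of b] f2_le[of b m] f2_pos
  by (auto simp: BB_def exdvd2_def)

lemma BB_pow: assumes "exdvd2 r (m+1)" "b \<in> BB m r" shows "(f2 m ^^ k) b \<in> BB m r"
  using assms by (induction k) (auto intro: BB_inv)

lemma odd_part: assumes "exdvd2 r a" obtains a' where "a = 2^r * a'" "odd a'"
proof -
  obtain a' where a: "a = 2^r * a'" using assms unfolding exdvd2_def by auto
  have "odd a'" using assms a unfolding exdvd2_def by auto
  then show ?thesis using a that by blast
qed

lemma BB_inj: assumes "exdvd2 r (m+1)" shows "inj_on (f2 m) (BB m r)"
proof
  fix a b assume a: "a \<in> BB m r" and b: "b \<in> BB m r" and e: "f2 m a = f2 m b"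
  show "a = b"
  proof (rule ccontr)
    assume ne: "a \<noteq> b"
    have "a + b = m + 1" using a b e ne by (auto simp: BB_def f2_alt split: if_splits)
    moreover obtain a' where "a = 2^r*a'" "odd a'" using a odd_part by (auto simp: BB_def)
    moreover obtain b' where "b = 2^r*b'" "odd b'" using b odd_part by (auto simp: BB_def)
    moreover obtain n' where "m+1 = 2^r*n'" "odd n'" using assms odd_part by blast
    ultimately have "2^r*(a'+b') = 2^r*n'" by (simp add: algebra_simps)
    hence "a'+b' = n'" by simp
    thus False using \<open>odd a'\<close> \<open>odd b'\<close> \<open>odd n'\<close> by auto
  qed
qed

lemma BB_periodic: assumes "exdvd2 r (m+1)" "a \<in> BB m r"
  shows "\<exists>t\<ge>1. (f2 m ^^ t) a = a"
proof -
  have fin: "finite (BB m r)" unfolding BB_def by auto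
  have "\<not> inj_on (\<lambda>k. (f2 m ^^ k) a) {0..card (BB m r)}"
  proof
    assume "inj_on (\<lambda>k. (f2 m ^^ k) a) {0..card (BB m r)}"
    moreover have "(\<lambda>k. (f2 m ^^ k) a) ` {0..card (BB m r)} \<subseteq> BB m r"
      using BB_pow[OF assms] by auto
    ultimately have "card {0..card (BB m r)} \<le> card (BB m r)" using card_inj_on_le fin by blast
    thus False by simp
  qed
  then obtain i j where ij: "i \<noteq> j" "(f2 m ^^ i) a = (f2 m ^^ j) a"
    unfolding inj_on_def by auto
  have gen: "\<And>i d. (f2 m ^^ i) a = (f2 m ^^ (i + d)) a \<Longrightarrow> (f2 m ^^ d) a = a"
  proof -
    fix i d show "(f2 m ^^ i) a = (f2 m ^^ (i + d)) a \<Longrightarrow> (f2 m ^^ d) a = a"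
    proof (induction i)
      case 0 then show ?case by simp
    next
      case (Suc i)
      have "f2 m ((f2 m ^^ i) a) = f2 m ((f2 m ^^ (i+d)) a)" using Suc.prems by simp
      moreover have "(f2 m ^^ i) a \<in> BB m r" "(f2 m ^^ (i+d)) a \<in> BB m r" using BB_pow[OF assms] by auto
      ultimately have "(f2 m ^^ i) a = (f2 m ^^ (i+d)) a" using BB_inj[OF assms(1)] unfolding inj_on_def by blast
      then show ?case using Suc.IH by simp
    qed
  qed
  show ?thesis
  proof (cases "i < j")
    case True
    then have "(f2 m ^^ (j-i)) a = a" using gen[of i "j-i"] ij by simp
    then show ?thesis using True by (intro exI[of _ "j-i"]) auto
  next
    case False
    then have "(f2 m ^^ (i-j)) a = a" using gen[of j "i-j"] ij by simp
    then show ?thesis using False ij(1) by (intro exI[of _ "i-j"]) auto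
  qed
qed

lemma funpow_app: "(f ^^ a) ((f ^^ b) x) = (f ^^ (a + b)) x" by (simp add: funpow_add)


lemma kap_ex_ST: assumes "x < m^2" shows "\<exists>s. \<exists>t\<ge>1. (kap m ^^ (s + t)) x = (kap m ^^ s) x"
proof -
  have "\<not> inj_on (\<lambda>k. (kap m ^^ k) x) {0..m^2}"
  proof
    assume "inj_on (\<lambda>k. (kap m ^^ k) x) {0..m^2}"
    moreover have "(\<lambda>k. (kap m ^^ k) x) ` {0..m^2} \<subseteq> {..<m^2}"
      using kap_pow_lt[OF assms] by auto
    ultimately have "card {0..m^2} \<le> card {..<m^2::nat}" using card_inj_on_le by blast
    thus False by simp
  qed
  then obtain i j where ij: "i < j" "(kap m ^^ i) x = (kap m ^^ j) x"
    unfolding inj_on_def by (metis linorder_neqE_nat)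
  then show ?thesis by (intro exI[of _ i] exI[of _ "j-i"]) auto
qed

lemma kapST: assumes "x < m^2"
  shows "kapT m x \<ge> 1" "(kap m ^^ (kapS m x + kapT m x)) x = (kap m ^^ kapS m x) x"
proof -
  have "\<exists>t\<ge>1. (kap m ^^ (kapS m x + t)) x = (kap m ^^ kapS m x) x"
    unfolding kapS_def using LeastI_ex[OF kap_ex_ST[OF assms]] .
  then have "kapT m x \<ge> 1 \<and> (kap m ^^ (kapS m x + kapT m x)) x = (kap m ^^ kapS m x) x"
    unfolding kapT_def by (metis (mono_tags, lifting) LeastI)
  then show "kapT m x \<ge> 1" "(kap m ^^ (kapS m x + kapT m x)) x = (kap m ^^ kapS m x) x" by auto
qed

lemma K_periodic: assumes "x < m^2" "y \<in> kapK m x"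
  shows "(kap m ^^ kapT m x) y = y"
proof -
  obtain i where y: "y = (kap m ^^ (kapS m x + i)) x" using assms(2) unfolding kapK_def by auto
  have "(kap m ^^ kapT m x) y = (kap m ^^ i) ((kap m ^^ (kapS m x + kapT m x)) x)"
    unfolding y funpow_app by (simp add: algebra_simps)
  also have "\<dots> = y" unfolding kapST(2)[OF assms(1)] y funpow_app by (simp add: algebra_simps)
  finally show ?thesis .
qed

lemma K_nonzero: assumes "x < m^2" "y \<in> kapK m x" "kapK m x \<noteq> {0}" shows "y \<noteq> 0"
proof
  assume y0: "y = 0"
  obtain i where i: "i < kapT m x" "0 = (kap m ^^ (kapS m x + i)) x"
    using assms(2) y0 unfolding kapK_def by auto
  have "kapK m x \<subseteq> {0}"
  proof
    fix z assume z: "z \<in> kapK m x"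
    obtain j where j: "z = (kap m ^^ (kapS m x + j)) x" using z unfolding kapK_def by auto
    have "z = (kap m ^^ kapT m x) z" using K_periodic[OF assms(1) z] by simp
    also have "\<dots> = (kap m ^^ (kapS m x + j + kapT m x)) x" unfolding j funpow_app
      by (simp add: algebra_simps)
    also have "kapS m x + j + kapT m x = (j + kapT m x - i) + (kapS m x + i)" using i(1) by simp
    also have "(kap m ^^ ((j + kapT m x - i) + (kapS m x + i))) x = 0"
      by (metis funpow_app i(2) kap_pow_0)
    finally show "z \<in> {0}" by simp
  qed
  then show False using assms(2,3) by auto
qed

lemma K_self: assumes "t \<ge> 1" "(kap m ^^ t) y = y" shows "y \<in> kapK m y"
proof -
  have S: "kapS m y = 0" unfolding kapS_def
    by (rule Least_equality) (use assms in auto)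
  have "kapT m y \<ge> 1" unfolding kapT_def S
    by (rule LeastI2[of _ t]) (use assms in auto)
  then show ?thesis unfolding kapK_def S by (auto intro!: exI[of _ 0])
qed

theorem lemma3p4p1:
  fixes m r :: nat
  assumes "m \<ge> 2" and "exdvd2 r (m + 1)"
  shows "(\<forall>a \<in> {1..m}. (\<exists>t\<ge>1. (f2 m ^^ t) a = a) \<longleftrightarrow> exdvd2 r a)
       \<and> \<Union> {kapK m x | x. x < m ^ 2 \<and> kapK m x \<noteq> {0}}
           = {a * (m - 1) | a. 1 \<le> a \<and> a \<le> m \<and> exdvd2 r a}"
proof -
  have P1: "\<forall>a \<in> {1..m}. (\<exists>t\<ge>1. (f2 m ^^ t) a = a) \<longleftrightarrow> exdvd2 r a"
    using periodic_imp[OF assms(2)] BB_periodic[OF assms(2)] by (auto simp: BB_def)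
  have "\<Union> {kapK m x | x. x < m ^ 2 \<and> kapK m x \<noteq> {0}}
           \<subseteq> {a * (m - 1) | a. 1 \<le> a \<and> a \<le> m \<and> exdvd2 r a}"
  proof
    fix z assume "z \<in> \<Union> {kapK m x | x. x < m ^ 2 \<and> kapK m x \<noteq> {0}}"
    then obtain x where x: "x < m^2" "kapK m x \<noteq> {0}" "z \<in> kapK m x" by auto
    have z0: "z \<noteq> 0" using K_nonzero[OF x(1) x(3) x(2)] .
    define T where "T = kapT m x"
    have T1: "T \<ge> 1" unfolding T_def using kapST(1)[OF x(1)] .
    have zp: "(kap m ^^ T) z = z" unfolding T_def using K_periodic[OF x(1) x(3)] .
    obtain i where zi: "z = (kap m ^^ (kapS m x + i)) x" using x(3) unfolding kapK_def by auto
    have zlt: "z < m^2" unfolding zi using kap_pow_lt[OF x(1)] .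
    define w where "w = (kap m ^^ (T - 1)) z"
    have "z = kap m w" unfolding w_def using zp T1
      by (metis One_nat_def Suc_diff_le diff_Suc_1 funpow.simps(2) o_apply)
    have wlt: "w < m^2" unfolding w_def using kap_pow_lt[OF zlt] .
    have m0: "m > 0" using assms(1) by simp
    have "w div m < m" using wlt by (simp add: power2_eq_square div_less_iff_less_mult m0)
    moreover have "w mod m < m" using m0 by simp
    ultimately have cle: "max (w div m) (w mod m) - min (w div m) (w mod m) \<le> m" by linarith
    define c where "c = max (w div m) (w mod m) - min (w div m) (w mod m)"
    have zc: "z = c * (m-1)" unfolding c_def using \<open>z = kap m w\<close> kap_eq by simp
    have c1: "c \<ge> 1" using z0 zc by (cases c) auto
    have "(f2 m ^^ T) c * (m-1) = c * (m-1)"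
      using kap_f2_pow[OF assms(1), of c T] cle zp zc unfolding c_def by simp
    then have "(f2 m ^^ T) c = c" using assms(1) by simp
    moreover have cm: "c \<le> m" unfolding c_def using cle .
    ultimately have "exdvd2 r c" using P1 c1 T1 by auto
    then show "z \<in> {a * (m - 1) | a. 1 \<le> a \<and> a \<le> m \<and> exdvd2 r a}"
      using zc c1 cm by blast
  qed
  moreover have "{a * (m - 1) | a. 1 \<le> a \<and> a \<le> m \<and> exdvd2 r a}
      \<subseteq> \<Union> {kapK m x | x. x < m ^ 2 \<and> kapK m x \<noteq> {0}}"
  proof
    fix z assume "z \<in> {a * (m - 1) | a. 1 \<le> a \<and> a \<le> m \<and> exdvd2 r a}"
    then obtain a where a: "z = a*(m-1)" "1 \<le> a" "a \<le> m" "exdvd2 r a" by auto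
    have "\<exists>t\<ge>1. (f2 m ^^ t) a = a" using P1 a by simp
    then obtain t where t: "t \<ge> 1" "(f2 m ^^ t) a = a" by blast
    have zp: "(kap m ^^ t) z = z" unfolding a(1) kap_f2_pow[OF assms(1) a(3)] t(2) ..
    have zK: "z \<in> kapK m z" using K_self[OF t(1) zp] .
    have z0: "z \<noteq> 0" using a assms(1) by simp
    have "z \<le> m * (m-1)" using a by simp
    also have "\<dots> < m^2" using assms(1) by (simp add: power2_eq_square)
    finally have "z < m^2" .
    show "z \<in> \<Union> {kapK m x | x. x < m ^ 2 \<and> kapK m x \<noteq> {0}}"
    proof (rule UnionI[of "kapK m z"])
      have nz: "kapK m z \<noteq> {0}"
      proof
        assume "kapK m z = {0}"
        with zK have "z = 0" by simp
        with z0 show False by simp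
      qed
      show "kapK m z \<in> {kapK m x | x. x < m ^ 2 \<and> kapK m x \<noteq> {0}}"
        unfolding mem_Collect_eq by (intro exI[of _ z] conjI refl \<open>z < m^2\<close> nz)
    qed (rule zK)
  qed
  ultimately show ?thesis using P1 by blast
qed

end
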